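(* Let $N\ge1$, $f:\mathbb{N}^N\to\mathbb{N}$, $k\ge0$ and $\boldsymbol{\ell}\in\mathbb{N}^N$. Then: (a) if $k$ is even and $\boldsymbol{\ell}$ has at least one odd entry, $\binom{k}{\boldsymbol{\ell}}_f\equiv 0\pmod 2$; (b) if $k$ is even and all entries of $\boldsymbol{\ell}$ are even, $\binom{k}{\boldsymbol{\ell}}_f\equiv\binom{k/2}{\boldsymbol{\ell}/2}_f\pmod 2$; (c) if $k$ is odd, $\displaystyle\binom{k}{\boldsymbol{\ell}}_f\equiv\sum_{\mathbf{s}}f(\mathbf{s})\binom{\lfloor k/2\rfloor}{(\boldsymbol{\ell}-\mathbf{s})/2}_f\pmod 2$, the sum over all $\mathbf{s}\in\mathbb{N}^N$ such that $\boldsymbol{\ell}-\mathbf{s}\in\mathbb{N}^N$ has only even entries.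
   Context: $\mathbb{N}=\{0,1,2,\dots\}$. For $k\ge0$ and $\mathbf{x}\in\mathbb{N}^N$, $\binom{k}{\mathbf{x}}_f=\sum_{\mathbf{m}_1+\cdots+\mathbf{m}_k=\mathbf{x}} f(\mathbf{m}_1)\cdots f(\mathbf{m}_k)$ over tuples of vectors in $\mathbb{N}^N$ (the number of $f$-weighted vector compositions of $\mathbf{x}$ with $k$ parts). *)

theory Defs
  imports "HOL-Analysis.Analysis"
begin

text \<open>Vectors in N^N are represented as functions nat => nat vanishing outside {..<N}.\<close>
definition vecs :: "nat \<Rightarrow> (nat \<Rightarrow> nat) set" where
  "vecs N = {x. \<forall>i\<ge>N. x i = 0}"

definition compositions :: "nat \<Rightarrow> nat \<Rightarrow> (nat \<Rightarrow> nat) \<Rightarrow> (nat \<Rightarrow> nat \<Rightarrow> nat) set" where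
  "compositions N k x = {ms. (\<forall>j<k. ms j \<in> vecs N) \<and> (\<forall>j\<ge>k. ms j = (\<lambda>_. 0))
        \<and> (\<forall>i. (\<Sum>j<k. ms j i) = x i)}"

definition fbinom :: "((nat \<Rightarrow> nat) \<Rightarrow> nat) \<Rightarrow> nat \<Rightarrow> nat \<Rightarrow> (nat \<Rightarrow> nat) \<Rightarrow> nat" where
  "fbinom f N k x = (\<Sum>ms\<in>compositions N k x. \<Prod>j<k. f (ms j))"

end

theory Submission
  imports Defs
begin

definition bx :: "nat \<Rightarrow> (nat \<Rightarrow> nat) \<Rightarrow> (nat \<Rightarrow> nat) set" where
  "bx N x = {s\<in>vecs N. \<forall>i<N. s i \<le> x i}"

lemma sum_split_add: fixes b :: nat shows "(\<Sum>j<a+b. g j) = (\<Sum>j<a. g j) + (\<Sum>j<b. (g (a+j)::'c::comm_monoid_add))"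
  by (induction b) (auto simp: add.assoc)

lemma prod_split_add: fixes b :: nat shows "(\<Prod>j<a+b. g j) = (\<Prod>j<a. g j) * (\<Prod>j<b. (g (a+j)::'c::comm_monoid_mult))"
  by (induction b) (auto simp: mult.assoc)

lemma finite_vecs_bounded: "finite {y\<in>vecs N. \<forall>i<N. y i \<le> M}"
proof -
  have "{y\<in>vecs N. \<forall>i<N. y i \<le> M} \<subseteq> {y. \<forall>i. (i \<in> {..<N} \<longrightarrow> y i \<in> {..M}) \<and> (i \<notin> {..<N} \<longrightarrow> y i = 0)}"
    by (auto simp: vecs_def)
  moreover have "finite {y. \<forall>i. (i \<in> {..<N} \<longrightarrow> y i \<in> {..M}) \<and> (i \<notin> {..<N} \<longrightarrow> y i = (0::nat))}"
    by (rule finite_set_of_finite_funs) auto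
  ultimately show ?thesis by (rule finite_subset)
qed

lemma finite_bx: "finite (bx N x)"
proof -
  have "bx N x \<subseteq> {y\<in>vecs N. \<forall>i<N. y i \<le> (\<Sum>i<N. x i)}"
    using member_le_sum[of _ "{..<N}" x] by (auto simp: bx_def intro: order_trans)
  then show ?thesis using finite_vecs_bounded finite_subset by blast
qed

lemma finite_compositions: "finite (compositions N k x)"
proof -
  define W where "W = {y\<in>vecs N. \<forall>i<N. y i \<le> (\<Sum>i<N. x i)}"
  have fw: "finite W" unfolding W_def by (rule finite_vecs_bounded)
  have "compositions N k x \<subseteq> {ms. \<forall>j. (j \<in> {..<k} \<longrightarrow> ms j \<in> W) \<and> (j \<notin> {..<k} \<longrightarrow> ms j = (\<lambda>_. 0))}"
  proof (intro subsetI CollectI allI conjI impI)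
    fix ms j assume ms: "ms \<in> compositions N k x" and j: "j \<in> {..<k}"
    show "ms j \<in> W" unfolding W_def
    proof safe
      show "ms j \<in> vecs N" using ms j by (auto simp: compositions_def)
      fix i assume i: "i < N"
      have "ms j i \<le> (\<Sum>j<k. ms j i)" using j by (intro member_le_sum) auto
      also have "\<dots> = x i" using ms by (auto simp: compositions_def)
      also have "\<dots> \<le> (\<Sum>i<N. x i)" using i by (intro member_le_sum) auto
      finally show "ms j i \<le> (\<Sum>i<N. x i)" .
    qed
  next
    fix ms j assume "ms \<in> compositions N k x" "j \<notin> {..<k}"
    then show "ms j = (\<lambda>_. 0)" unfolding compositions_def by simp
  qed
  moreover have "finite {ms. \<forall>j. (j \<in> {..<k} \<longrightarrow> ms j \<in> W) \<and> (j \<notin> {..<k} \<longrightarrow> ms j = (\<lambda>_. (0::nat)))}"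
    using finite_set_of_finite_funs[OF _ fw, of "{..<k}" "\<lambda>_. 0"] by simp
  ultimately show ?thesis by (rule finite_subset)
qed

lemma conv:
  assumes x: "x \<in> vecs N"
  shows "fbinom f N (a+b) x = (\<Sum>y\<in>bx N x. fbinom f N a y * fbinom f N b (\<lambda>i. x i - y i))"
proof -
  define C where "C = compositions N"
  define P where "P = (\<lambda>(k::nat) ms. \<Prod>j<k. f (ms j))"
  define T where "T = (SIGMA y:bx N x. C a y \<times> C b (\<lambda>i. x i - y i))"
  define \<phi> where "\<phi> = (\<lambda>(t::(nat\<Rightarrow>nat)\<times>(nat\<Rightarrow>nat\<Rightarrow>nat)\<times>(nat\<Rightarrow>nat\<Rightarrow>nat)).
      (\<lambda>j. if j < a then fst (snd t) j else snd (snd t) (j - a)))"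
  define \<psi> where "\<psi> = (\<lambda>ms::nat\<Rightarrow>nat\<Rightarrow>nat. ((\<lambda>i. \<Sum>j<a. ms j i),
      (\<lambda>j. if j < a then ms j else (\<lambda>_. 0)), (\<lambda>j. ms (a+j))))"
  have bij: "bij_betw \<phi> T (C (a+b) x)"
  proof (rule bij_betw_byWitness[where f'=\<psi>])
    show "\<forall>t\<in>T. \<psi> (\<phi> t) = t"
    proof
      fix t assume "t \<in> T"
      then obtain y p q where t: "t = (y,p,q)" and y: "y \<in> bx N x" and p: "p \<in> C a y"
        and q: "q \<in> C b (\<lambda>i. x i - y i)" unfolding T_def by auto
      have 1: "(\<lambda>i. \<Sum>j<a. p j i) = y" using p by (auto simp: C_def compositions_def)
      define ms where "ms = (\<lambda>j. if j < a then p j else q (j - a))"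
      have e: "\<phi> t = ms"
      proof (rule ext)
        fix j show "\<phi> t j = ms j" by (cases "j < a") (simp_all add: t \<phi>_def ms_def)
      qed
      have a1: "(\<lambda>i. \<Sum>j<a. ms j i) = y" unfolding 1[symmetric] ms_def by simp
      have a2: "(\<lambda>j. if j < a then ms j else (\<lambda>_. 0)) = p"
      proof (rule ext)
        fix j show "(if j < a then ms j else (\<lambda>_. 0)) = p j"
          using p by (cases "j < a") (auto simp: ms_def C_def compositions_def)
      qed
      have a3: "(\<lambda>j. ms (a+j)) = q" unfolding ms_def by simp
      have "\<psi> (\<phi> t) = (y,p,q)" unfolding e \<psi>_def a1 a2 a3 ..
      then show "\<psi> (\<phi> t) = t" using t by simp
    qed
    show "\<forall>ms\<in>C (a+b) x. \<phi> (\<psi> ms) = ms"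
    proof (rule ballI)
      fix ms assume "ms \<in> C (a+b) x"
      show "\<phi> (\<psi> ms) = ms"
      proof (rule ext)
        fix j show "\<phi> (\<psi> ms) j = ms j" by (cases "j < a") (simp_all add: \<phi>_def \<psi>_def)
      qed
    qed
    show "\<phi> ` T \<subseteq> C (a+b) x"
    proof
      fix ms assume "ms \<in> \<phi> ` T"
      then obtain y p q where ms: "ms = \<phi> (y,p,q)" and y: "y \<in> bx N x" and p: "p \<in> C a y"
        and q: "q \<in> C b (\<lambda>i. x i - y i)" unfolding T_def by auto
      have yx: "y i \<le> x i" for i
        using y x by (cases "i < N") (auto simp: bx_def vecs_def)
      show "ms \<in> C (a+b) x" unfolding C_def compositions_def
      proof (intro CollectI conjI allI impI)
        fix j assume "j < a+b" then show "ms j \<in> vecs N"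
          using p q by (auto simp: ms \<phi>_def C_def compositions_def)
      next
        fix j assume "a + b \<le> j" then show "ms j = (\<lambda>_. 0)"
          using p q by (auto simp: ms \<phi>_def C_def compositions_def)
      next
        fix i
        have "(\<Sum>j<a+b. ms j i) = (\<Sum>j<a. ms j i) + (\<Sum>j<b. ms (a+j) i)" by (rule sum_split_add)
        also have "\<dots> = (\<Sum>j<a. p j i) + (\<Sum>j<b. q j i)" by (simp add: ms \<phi>_def)
        also have "\<dots> = y i + (x i - y i)" using p q by (simp add: C_def compositions_def)
        also have "\<dots> = x i" using yx[of i] by simp
        finally show "(\<Sum>j<a+b. ms j i) = x i" .
      qed
    qed
    show "\<psi> ` C (a+b) x \<subseteq> T"
    proof
      fix t assume "t \<in> \<psi> ` C (a+b) x"
      then obtain ms where t: "t = \<psi> ms" and ms: "ms \<in> C (a+b) x" by auto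
      define y where "y = (\<lambda>i. \<Sum>j<a. ms j i)"
      have msv: "\<And>j. j < a + b \<Longrightarrow> ms j \<in> vecs N" and ms0: "\<And>j. j \<ge> a + b \<Longrightarrow> ms j = (\<lambda>_. 0)"
        and mss: "\<And>i. (\<Sum>j<a+b. ms j i) = x i" using ms by (auto simp: C_def compositions_def)
      have split: "x i = y i + (\<Sum>j<b. ms (a+j) i)" for i
        using mss[of i] sum_split_add[of "\<lambda>j. ms j i" a b] by (simp add: y_def)
      have yb: "y \<in> bx N x"
        unfolding bx_def vecs_def
      proof (intro CollectI conjI allI impI)
        fix i assume "N \<le> i"
        then show "y i = 0" using msv unfolding y_def vecs_def by auto
      next
        fix i assume "i < N" show "y i \<le> x i" using split[of i] by simp
      qed
      have pa: "(\<lambda>j. if j < a then ms j else (\<lambda>_. 0)) \<in> C a y"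
        using msv by (auto simp: C_def compositions_def y_def)
      have qb: "(\<lambda>j. ms (a+j)) \<in> C b (\<lambda>i. x i - y i)"
        unfolding C_def compositions_def
      proof (intro CollectI conjI allI impI)
        fix j assume "j < b" then show "ms (a+j) \<in> vecs N" using msv by auto
      next
        fix j assume "b \<le> j" then show "ms (a+j) = (\<lambda>_. 0)" using ms0 by auto
      next
        fix i show "(\<Sum>j<b. ms (a+j) i) = x i - y i" using split[of i] by simp
      qed
      show "t \<in> T" unfolding t T_def \<psi>_def using yb pa qb by (simp add: y_def)
    qed
  qed
  have fin: "finite (bx N x)" "\<And>y. finite (C a y \<times> C b (\<lambda>i. x i - y i))"
    by (auto simp: finite_bx C_def finite_compositions)
  have "(\<Sum>y\<in>bx N x. fbinom f N a y * fbinom f N b (\<lambda>i. x i - y i))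
      = (\<Sum>y\<in>bx N x. \<Sum>p\<in>C a y. \<Sum>q\<in>C b (\<lambda>i. x i - y i). P a p * P b q)"
    by (simp add: fbinom_def sum_product C_def P_def)
  also have "\<dots> = (\<Sum>y\<in>bx N x. \<Sum>pq\<in>C a y \<times> C b (\<lambda>i. x i - y i). P a (fst pq) * P b (snd pq))"
    by (simp add: sum.cartesian_product case_prod_beta)
  also have "\<dots> = (\<Sum>t\<in>T. P a (fst (snd t)) * P b (snd (snd t)))"
    unfolding T_def by (subst sum.Sigma) (use fin in \<open>auto simp: case_prod_beta\<close>)
  also have "\<dots> = (\<Sum>t\<in>T. P (a+b) (\<phi> t))"
  proof (rule sum.cong[OF refl])
    fix t assume "t \<in> T"
    then obtain y p q where t: "t = (y,p,q)" unfolding T_def by auto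
    show "P a (fst (snd t)) * P b (snd (snd t)) = P (a+b) (\<phi> t)"
    proof -
      have e: "\<phi> t = (\<lambda>j. if j < a then p j else q (j - a))"
      proof (rule ext)
        fix j show "\<phi> t j = (if j < a then p j else q (j - a))" by (cases "j < a") (simp_all add: t \<phi>_def)
      qed
      show ?thesis
        unfolding P_def e using prod_split_add[of "\<lambda>j. f (if j < a then p j else q (j - a))" a b]
        by (simp add: t)
    qed
  qed
  also have "\<dots> = (\<Sum>ms\<in>C (a+b) x. P (a+b) ms)"
    by (rule sum.reindex_bij_betw[OF bij])
  also have "\<dots> = fbinom f N (a+b) x" by (simp add: fbinom_def C_def P_def)
  finally show ?thesis by simp
qed

lemma invol_even:
  fixes h :: "'a \<Rightarrow> nat"
  assumes "finite B" "\<forall>y\<in>B. \<sigma> y \<in> B \<and> \<sigma> (\<sigma> y) = y \<and> \<sigma> y \<noteq> y \<and> h (\<sigma> y) = h y"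
  shows "even (sum h B)"
  using assms
proof (induction "card B" arbitrary: B rule: less_induct)
  case less
  show ?case
  proof (cases "B = {}")
    case True then show ?thesis by simp
  next
    case False
    then obtain y where y: "y \<in> B" by blast
    have sy: "\<sigma> y \<in> B - {y}" "h (\<sigma> y) = h y" using less.prems y by auto
    have e1: "sum h B = h y + sum h (B - {y})" using less.prems(1) y by (simp add: sum.remove)
    have e2: "sum h (B - {y}) = h (\<sigma> y) + sum h (B - {y} - {\<sigma> y})"
      using less.prems(1) sy(1) by (simp add: sum.remove)
    have c: "card (B - {y} - {\<sigma> y}) < card B"
    proof -
      have "card (B - {y} - {\<sigma> y}) \<le> card (B - {y})"
        using less.prems(1) by (intro card_mono) auto
      also have "\<dots> < card B" using less.prems(1) y by (rule card_Diff1_less)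
      finally show ?thesis .
    qed
    have cl: "\<forall>z\<in>B - {y} - {\<sigma> y}. \<sigma> z \<in> B - {y} - {\<sigma> y} \<and> \<sigma> (\<sigma> z) = z \<and> \<sigma> z \<noteq> z \<and> h (\<sigma> z) = h z"
    proof
      fix z assume z: "z \<in> B - {y} - {\<sigma> y}"
      have zz: "\<sigma> (\<sigma> z) = z" using z less.prems(2) by auto
      have yy: "\<sigma> (\<sigma> y) = y" using y less.prems(2) by auto
      have "\<sigma> z \<noteq> y"
      proof
        assume "\<sigma> z = y"
        then have "\<sigma> y = z" using zz by simp
        then show False using z by simp
      qed
      moreover have "\<sigma> z \<noteq> \<sigma> y"
      proof
        assume "\<sigma> z = \<sigma> y"
        then have "\<sigma> (\<sigma> z) = \<sigma> (\<sigma> y)" by simp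
        then have "z = y" using zz yy by simp
        then show False using z by simp
      qed
      ultimately show "\<sigma> z \<in> B - {y} - {\<sigma> y} \<and> \<sigma> (\<sigma> z) = z \<and> \<sigma> z \<noteq> z \<and> h (\<sigma> z) = h z"
        using z less.prems(2) by auto
    qed
    have fin': "finite (B - {y} - {\<sigma> y})" using less.prems(1) by simp
    have "even (sum h (B - {y} - {\<sigma> y}))"
      by (rule less.hyps[OF c fin' cl])
    then show ?thesis using e1 e2 sy(2) by simp
  qed
qed

lemma sum_invol_mod2:
  fixes h :: "'a \<Rightarrow> nat"
  assumes fin: "finite A" and inv: "\<forall>y\<in>A. \<sigma> y \<in> A \<and> \<sigma> (\<sigma> y) = y \<and> h (\<sigma> y) = h y"
  shows "sum h A mod 2 = sum h {y\<in>A. \<sigma> y = y} mod 2"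
proof -
  have eA: "A = {y\<in>A. \<sigma> y = y} \<union> {y\<in>A. \<sigma> y \<noteq> y}" by auto
  have "sum h ({y\<in>A. \<sigma> y = y} \<union> {y\<in>A. \<sigma> y \<noteq> y}) = sum h {y\<in>A. \<sigma> y = y} + sum h {y\<in>A. \<sigma> y \<noteq> y}"
    by (rule sum.union_disjoint) (use fin in auto)
  then have "sum h A = sum h {y\<in>A. \<sigma> y = y} + sum h {y\<in>A. \<sigma> y \<noteq> y}"
    using eA by simp
  moreover have "even (sum h {y\<in>A. \<sigma> y \<noteq> y})"
  proof (rule invol_even[of _ \<sigma>])
    show "finite {y\<in>A. \<sigma> y \<noteq> y}" using fin by simp
    show "\<forall>y\<in>{y\<in>A. \<sigma> y \<noteq> y}. \<sigma> y \<in> {y\<in>A. \<sigma> y \<noteq> y} \<and> \<sigma> (\<sigma> y) = y \<and> \<sigma> y \<noteq> y \<and> h (\<sigma> y) = h y"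
    proof
      fix y assume y: "y \<in> {y\<in>A. \<sigma> y \<noteq> y}"
      then have "\<sigma> y \<in> A" "\<sigma> (\<sigma> y) = y" "h (\<sigma> y) = h y" "\<sigma> y \<noteq> y" using inv by auto
      then show "\<sigma> y \<in> {y\<in>A. \<sigma> y \<noteq> y} \<and> \<sigma> (\<sigma> y) = y \<and> \<sigma> y \<noteq> y \<and> h (\<sigma> y) = h y"
        by auto
    qed
  qed
  ultimately show ?thesis by auto
qed

lemma sum_mod_cong:
  fixes g g' :: "'a \<Rightarrow> nat"
  assumes "\<And>x. x \<in> A \<Longrightarrow> g x mod m = g' x mod m"
  shows "sum g A mod m = sum g' A mod m"
proof -
  have "sum g A mod m = (\<Sum>x\<in>A. g x mod m) mod m" by (simp add: mod_sum_eq)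
  also have "\<dots> = (\<Sum>x\<in>A. g' x mod m) mod m" using assms by simp
  also have "\<dots> = sum g' A mod m" by (simp add: mod_sum_eq)
  finally show ?thesis .
qed

lemma sq_mod2: "((a::nat) * a) mod 2 = a mod 2"
  by (cases "even a") (auto simp: mod2_eq_if)

lemma fbinom_one:
  assumes s: "s \<in> vecs N"
  shows "fbinom f N 1 s = f s"
proof -
  define m0 where "m0 = (\<lambda>j::nat. if j = 0 then s else (\<lambda>_::nat. 0::nat))"
  have "compositions N 1 s = {m0}"
  proof (intro equalityI subsetI)
    fix ms assume ms: "ms \<in> compositions N 1 s"
    have "ms = m0"
    proof (rule ext)
      fix j show "ms j = m0 j"
      proof (cases "j = 0")
        case True
        have "ms 0 i = s i" for i using ms by (auto simp: compositions_def)
        then show ?thesis using True by (auto simp: m0_def)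
      next
        case False then show ?thesis using ms by (auto simp: m0_def compositions_def)
      qed
    qed
    then show "ms \<in> {m0}" by simp
  next
    fix ms assume "ms \<in> {m0}"
    then show "ms \<in> compositions N 1 s" using s by (auto simp: m0_def compositions_def)
  qed
  then show ?thesis by (simp add: fbinom_def m0_def)
qed

lemma even_case:
  assumes x: "x \<in> vecs N"
  shows "fbinom f N (2*m) x mod 2 =
    (if \<forall>i<N. even (x i) then fbinom f N m (\<lambda>i. x i div 2) else 0) mod 2"
proof -
  define F where "F = fbinom f N m"
  define \<sigma> where "\<sigma> = (\<lambda>y::nat\<Rightarrow>nat. \<lambda>i. x i - y i)"
  define h where "h = (\<lambda>y. F y * F (\<sigma> y))"
  have x0: "i \<ge> N \<Longrightarrow> x i = 0" for i using x by (auto simp: vecs_def)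
  have yx: "y \<in> bx N x \<Longrightarrow> y i \<le> x i" for y i
    by (cases "i < N") (auto simp: bx_def vecs_def)
  have ss: "y \<in> bx N x \<Longrightarrow> \<sigma> (\<sigma> y) = y" for y
    using yx by (auto simp: \<sigma>_def fun_eq_iff)
  have sb: "y \<in> bx N x \<Longrightarrow> \<sigma> y \<in> bx N x" for y
    using x0 by (auto simp: \<sigma>_def bx_def vecs_def)
  have "fbinom f N (2*m) x = (\<Sum>y\<in>bx N x. h y)"
    using conv[OF x, of f m m] by (simp add: mult_2 F_def h_def \<sigma>_def)
  also have "\<dots> mod 2 = sum h {y\<in>bx N x. \<sigma> y = y} mod 2"
  proof (rule sum_invol_mod2)
    show "finite (bx N x)" by (rule finite_bx)
    show "\<forall>y\<in>bx N x. \<sigma> y \<in> bx N x \<and> \<sigma> (\<sigma> y) = y \<and> h (\<sigma> y) = h y"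
      using ss sb by (auto simp: h_def)
  qed
  also have "\<dots> = (if \<forall>i<N. even (x i) then F (\<lambda>i. x i div 2) else 0) mod 2"
  proof (cases "\<forall>i<N. even (x i)")
    case True
    define z where "z = (\<lambda>i. x i div 2)"
    have "{y\<in>bx N x. \<sigma> y = y} = {z}"
    proof (intro equalityI subsetI)
      fix y assume y: "y \<in> {y\<in>bx N x. \<sigma> y = y}"
      have "y i = z i" for i
      proof -
        have "x i - y i = y i" using y by (auto simp: \<sigma>_def fun_eq_iff)
        moreover have "y i \<le> x i" using y yx by auto
        ultimately show ?thesis by (auto simp: z_def)
      qed
      then show "y \<in> {z}" by auto
    next
      fix y assume "y \<in> {z}"
      then have yz: "y = z" by simp
      have "z \<in> bx N x" using x0 by (auto simp: z_def bx_def vecs_def)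
      moreover have "\<sigma> z = z"
      proof (rule ext)
        fix i show "\<sigma> z i = z i"
        proof (cases "i < N")
          case True' : True
          then have "even (x i)" using True by auto
          then show ?thesis by (auto simp: \<sigma>_def z_def elim!: evenE)
        next
          case False then show ?thesis using x0 by (auto simp: \<sigma>_def z_def)
        qed
      qed
      ultimately show "y \<in> {y\<in>bx N x. \<sigma> y = y}" using yz by simp
    qed
    note fixz = this
    have "\<sigma> z = z" using fixz by blast
    then have "sum h {y\<in>bx N x. \<sigma> y = y} = F z * F z" by (simp add: h_def fixz)
    then show ?thesis using True by (simp add: sq_mod2 z_def)
  next
    case False
    then obtain i where i: "i < N" "odd (x i)" by auto
    have "{y\<in>bx N x. \<sigma> y = y} = {}"
    proof (rule ccontr)
      assume "{y\<in>bx N x. \<sigma> y = y} \<noteq> {}"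
      then obtain y where y: "y \<in> bx N x" "\<sigma> y = y" by auto
      have "x i - y i = y i" using y(2) by (auto simp: \<sigma>_def fun_eq_iff)
      moreover have "y i \<le> x i" using y yx by auto
      ultimately have "x i = 2 * y i" by auto
      then show False using i by simp
    qed
    then have "sum h {y\<in>bx N x. \<sigma> y = y} = 0" by (simp only: sum.empty)
    then show ?thesis using False by (simp only:) simp
  qed
  finally show ?thesis by (simp only: F_def)
qed

theorem theorem5:
  fixes f :: "(nat \<Rightarrow> nat) \<Rightarrow> nat" and N k :: nat and l :: "nat \<Rightarrow> nat"
  assumes "N \<ge> 1" and "l \<in> vecs N"
  shows "(even k \<and> (\<exists>i<N. odd (l i)) \<longrightarrow> fbinom f N k l mod 2 = 0)
    \<and> (even k \<and> (\<forall>i<N. even (l i)) \<longrightarrow>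
         fbinom f N k l mod 2 = fbinom f N (k div 2) (\<lambda>i. l i div 2) mod 2)
    \<and> (odd k \<longrightarrow>
         fbinom f N k l mod 2 =
           (\<Sum>s\<in>{s\<in>vecs N. (\<forall>i<N. s i \<le> l i \<and> even (l i - s i))}.
               f s * fbinom f N (k div 2) (\<lambda>i. (l i - s i) div 2)) mod 2)"
proof (intro conjI impI)
  assume h: "even k \<and> (\<exists>i<N. odd (l i))"
  then have k: "2 * (k div 2) = k" by simp
  have E: "fbinom f N k l mod 2 = (if \<forall>i<N. even (l i) then fbinom f N (k div 2) (\<lambda>i. l i div 2) else 0) mod 2"
    using even_case[OF assms(2), of f "k div 2"] unfolding k .
  show "fbinom f N k l mod 2 = 0"
    using E h by auto
next
  assume h: "even k \<and> (\<forall>i<N. even (l i))"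
  then have k: "2 * (k div 2) = k" by simp
  have E: "fbinom f N k l mod 2 = (if \<forall>i<N. even (l i) then fbinom f N (k div 2) (\<lambda>i. l i div 2) else 0) mod 2"
    using even_case[OF assms(2), of f "k div 2"] unfolding k .
  show "fbinom f N k l mod 2 = fbinom f N (k div 2) (\<lambda>i. l i div 2) mod 2"
    using E h by simp
next
  assume h: "odd k"
  define m where "m = k div 2"
  have k: "k = 1 + 2 * m" using h by (simp add: m_def)
  define P where "P = (\<lambda>s::nat\<Rightarrow>nat. \<forall>i<N. even (l i - s i))"
  have l0: "i \<ge> N \<Longrightarrow> l i = 0" for i using assms(2) by (auto simp: vecs_def)
  have "fbinom f N k l = (\<Sum>s\<in>bx N l. fbinom f N 1 s * fbinom f N (2*m) (\<lambda>i. l i - s i))"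
    unfolding k by (rule conv[OF assms(2)])
  also have "\<dots> = (\<Sum>s\<in>bx N l. f s * fbinom f N (2*m) (\<lambda>i. l i - s i))"
  proof (rule sum.cong[OF refl])
    fix s assume "s \<in> bx N l"
    then have "s \<in> vecs N" by (simp add: bx_def)
    from fbinom_one[OF this, of f] show "fbinom f N 1 s * fbinom f N (2*m) (\<lambda>i. l i - s i) = f s * fbinom f N (2*m) (\<lambda>i. l i - s i)"
      by simp
  qed
  finally have "fbinom f N k l mod 2 = (\<Sum>s\<in>bx N l. f s * fbinom f N (2*m) (\<lambda>i. l i - s i)) mod 2" by simp
  also have "\<dots> = (\<Sum>s\<in>bx N l. if P s then f s * fbinom f N m (\<lambda>i. (l i - s i) div 2) else 0) mod 2"
  proof (rule sum_mod_cong)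
    fix s assume s: "s \<in> bx N l"
    have v: "(\<lambda>i. l i - s i) \<in> vecs N" using l0 by (auto simp: vecs_def)
    have "(f s * fbinom f N (2*m) (\<lambda>i. l i - s i)) mod 2
        = (f s * (fbinom f N (2*m) (\<lambda>i. l i - s i) mod 2)) mod 2" by (simp add: mod_mult_right_eq)
    also have "\<dots> = (f s * ((if P s then fbinom f N m (\<lambda>i. (l i - s i) div 2) else 0) mod 2)) mod 2"
      using even_case[OF v, of f m] by (simp add: P_def)
    also have "\<dots> = (if P s then f s * fbinom f N m (\<lambda>i. (l i - s i) div 2) else 0) mod 2"
      by (simp add: mod_mult_right_eq)
    finally show "(f s * fbinom f N (2*m) (\<lambda>i. l i - s i)) mod 2
        = (if P s then f s * fbinom f N m (\<lambda>i. (l i - s i) div 2) else 0) mod 2" .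
  qed
  also have "(\<Sum>s\<in>bx N l. if P s then f s * fbinom f N m (\<lambda>i. (l i - s i) div 2) else 0)
      = (\<Sum>s\<in>{s\<in>bx N l. P s}. f s * fbinom f N m (\<lambda>i. (l i - s i) div 2))"
    by (rule sum.inter_filter[symmetric]) (rule finite_bx)
  also have "{s\<in>bx N l. P s} = {s\<in>vecs N. (\<forall>i<N. s i \<le> l i \<and> even (l i - s i))}"
    by (auto simp: bx_def P_def)
  finally show "fbinom f N k l mod 2 =
           (\<Sum>s\<in>{s\<in>vecs N. (\<forall>i<N. s i \<le> l i \<and> even (l i - s i))}.
               f s * fbinom f N (k div 2) (\<lambda>i. (l i - s i) div 2)) mod 2"
    by (simp add: m_def)
qed

end
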